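(* Let $k$ be a positive integer and let $f$ be the timelike minimal surface, defined on a neighbourhood of the origin in the $(u,v)$-plane, with real Weierstrass data $(g_1,g_2,\hat\omega_1du,\hat\omega_2dv)$ where $g_1=g_1(u)$ is a real-valued smooth function, $\hat\omega_1=\hat\omega_1(u)$ is smooth with $\hat{\omega}_1(0)\neq0$, $g_2(v)=v^{2k-1}$ and $\hat{\omega}_2(v)=v$. Then $f$ has $(2,2k+1)$-cuspidal edges along $v=0$: at each point $(u_0,0)$ with $\hat\omega_1(u_0)\ne0$ (in particular at every point of $\{v=0\}$ sufficiently near the origin), $f$ is $\mathcal{A}$-equivalent to the $(2,2k+1)$-cuspidal edge.
   Context: $\mathbb{L}^3$ is $\mathbb{R}^3$ with the Lorentzian metric $-dt^2+dx^2+dy^2$. The surface with real Weierstrass data $(g_1,g_2,\hat\omega_1du,\hat\omega_2dv)$ is $f(u,v)=\tfrac12\int_{0}^u(-1-g_1^2,1-g_1^2,2g_1)\hat{\omega}_1du+\tfrac12\int_{0}^v(1+g_2^2,1-g_2^2,-2g_2)\hat{\omega}_2dv$ (up to translation). $\mathcal{A}$-equivalence means equality of map germs up to diffeomorphism germs of source and target. The $(2,2k+1)$-cuspidal edge is the germ at $0$ of $(u,v)\mapsto(u,v^2,v^{2k+1})$. *)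

theory Defs
  imports "HOL-Analysis.Analysis"
begin

fun Cn_on :: "nat \<Rightarrow> 'a::euclidean_space set \<Rightarrow> ('a \<Rightarrow> 'b::euclidean_space) \<Rightarrow> bool" where
  "Cn_on 0 S f = continuous_on S f"
| "Cn_on (Suc n) S f =
     (\<exists>f'. (\<forall>x\<in>S. (f has_derivative f' x) (at x)) \<and> (\<forall>v. Cn_on n S (\<lambda>x. f' x v)))"

definition smooth_on :: "'a::euclidean_space set \<Rightarrow> ('a \<Rightarrow> 'b::euclidean_space) \<Rightarrow> bool" where
  "smooth_on S f \<longleftrightarrow> (\<forall>n. Cn_on n S f)"

definition diffeo_between :: "'a::euclidean_space set \<Rightarrow> 'a set \<Rightarrow> ('a \<Rightarrow> 'a) \<Rightarrow> bool" where
  "diffeo_between U V \<phi> \<longleftrightarrow> open U \<and> open V \<and> smooth_on U \<phi> \<and> \<phi> ` U = V \<and>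
     (\<exists>\<psi>. smooth_on V \<psi> \<and> \<psi> ` V = U \<and> (\<forall>x\<in>U. \<psi> (\<phi> x) = x) \<and> (\<forall>y\<in>V. \<phi> (\<psi> y) = y))"

definition A_equivalent ::
  "('a::euclidean_space \<Rightarrow> 'b::euclidean_space) \<Rightarrow> 'a \<Rightarrow> ('a \<Rightarrow> 'b) \<Rightarrow> 'a \<Rightarrow> bool" where
  "A_equivalent f p g q \<longleftrightarrow>
     (\<exists>U U' \<phi> W W' \<psi>. p \<in> U \<and> diffeo_between U U' \<phi> \<and> \<phi> p = q \<and>
        f p \<in> W \<and> diffeo_between W W' \<psi> \<and> \<psi> (f p) = g q \<and>
        (\<forall>x\<in>U. f x \<in> W \<and> \<psi> (f x) = g (\<phi> x)))"

definition oint :: "real \<Rightarrow> real \<Rightarrow> (real \<Rightarrow> 'a::euclidean_space) \<Rightarrow> 'a" where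
  "oint a b h = (if a \<le> b then integral {a..b} h else - integral {b..a} h)"

text \<open>Timelike minimal surface in L^3 (coordinates (t,x,y)) with real Weierstrass data
  (g1, g2, w1 du, w2 dv).\<close>
definition wsurf :: "(real \<Rightarrow> real) \<Rightarrow> (real \<Rightarrow> real) \<Rightarrow> (real \<Rightarrow> real) \<Rightarrow> (real \<Rightarrow> real)
    \<Rightarrow> real \<times> real \<Rightarrow> real \<times> real \<times> real" where
  "wsurf g1 w1 g2 w2 = (\<lambda>(u, v).
      (1/2) *\<^sub>R oint 0 u (\<lambda>s. w1 s *\<^sub>R (- 1 - (g1 s)\<^sup>2, 1 - (g1 s)\<^sup>2, 2 * g1 s))
    + (1/2) *\<^sub>R oint 0 v (\<lambda>t. w2 t *\<^sub>R (1 + (g2 t)\<^sup>2, 1 - (g2 t)\<^sup>2, - 2 * g2 t)))"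

definition cuspidal_edge :: "nat \<Rightarrow> real \<times> real \<Rightarrow> real \<times> real \<times> real" where
  "cuspidal_edge k = (\<lambda>(u, v). (u, v ^ 2, v ^ (2 * k + 1)))"

end

theory Submission
  imports Defs
begin

lemma CnSucI:
  assumes "\<And>x. x \<in> S \<Longrightarrow> (f has_derivative f' x) (at x)"
    and "\<And>v. Cn_on n S (\<lambda>x. f' x v)"
  shows "Cn_on (Suc n) S f"
  unfolding Cn_on.simps(2) using assms by blast

lemma CnSucE:
  assumes "Cn_on (Suc n) S f"
  obtains f' where "\<And>x. x \<in> S \<Longrightarrow> (f has_derivative f' x) (at x)"
    and "\<And>v. Cn_on n S (\<lambda>x. f' x v)"
  using assms unfolding Cn_on.simps(2) by blast

lemma Cn_Suc_mono: "Cn_on (Suc n) S f \<Longrightarrow> Cn_on n S f"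
proof (induction n arbitrary: f)
  case 0
  then obtain f' where d: "\<And>x. x \<in> S \<Longrightarrow> (f has_derivative f' x) (at x)"
    by (rule CnSucE) blast
  then show ?case unfolding Cn_on.simps(1)
    by (intro continuous_at_imp_continuous_on ballI has_derivative_continuous) 
next
  case (Suc n)
  obtain f' where d: "\<And>x. x \<in> S \<Longrightarrow> (f has_derivative f' x) (at x)"
    and c: "\<And>v. Cn_on (Suc n) S (\<lambda>x. f' x v)" by (rule CnSucE[OF Suc.prems]) blast
  show ?case by (rule CnSucI[OF d Suc.IH[OF c]])
qed

lemma Cn_mono_add: "Cn_on (m + k) S f \<Longrightarrow> Cn_on m S f"
proof (induction k)
  case (Suc k) then show ?case by (metis Cn_Suc_mono add_Suc_right)
qed simp

lemma Cn_mono: "Cn_on n S f \<Longrightarrow> m \<le> n \<Longrightarrow> Cn_on m S f"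
  using Cn_mono_add[of m "n - m" S f] by simp

lemma Cn_subset: "Cn_on n S f \<Longrightarrow> T \<subseteq> S \<Longrightarrow> Cn_on n T f"
proof (induction n arbitrary: f)
  case 0 then show ?case by (auto intro: continuous_on_subset)
next
  case (Suc n)
  obtain f' where d: "\<And>x. x \<in> S \<Longrightarrow> (f has_derivative f' x) (at x)"
    and c: "\<And>v. Cn_on n S (\<lambda>x. f' x v)" by (rule CnSucE[OF Suc.prems(1)]) blast
  show ?case
    by (rule CnSucI[of T f f']) (use d Suc.prems in blast, rule Suc.IH[OF c Suc.prems(2)])
qed

lemma Cn_const: "Cn_on n S (\<lambda>x. c)"
proof (induction n arbitrary: c)
  case 0 then show ?case by simp
next
  case (Suc n)
  show ?case by (rule CnSucI[of S _ "\<lambda>x v. 0"]) (simp, rule Suc.IH)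
qed

lemma Cn_add: "Cn_on n S f \<Longrightarrow> Cn_on n S g \<Longrightarrow> Cn_on n S (\<lambda>x. f x + g x)"
proof (induction n arbitrary: f g)
  case 0 then show ?case by (auto intro: continuous_on_add)
next
  case (Suc n)
  obtain f' where df: "\<And>x. x \<in> S \<Longrightarrow> (f has_derivative f' x) (at x)"
    and cf: "\<And>v. Cn_on n S (\<lambda>x. f' x v)" by (rule CnSucE[OF Suc.prems(1)]) blast
  obtain g' where dg: "\<And>x. x \<in> S \<Longrightarrow> (g has_derivative g' x) (at x)"
    and cg: "\<And>v. Cn_on n S (\<lambda>x. g' x v)" by (rule CnSucE[OF Suc.prems(2)]) blast
  show ?case
    by (rule CnSucI[of S _ "\<lambda>x v. f' x v + g' x v"])
      (rule has_derivative_add[OF df dg], assumption+, rule Suc.IH[OF cf cg])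
qed

lemma Cn_linear: "bounded_linear L \<Longrightarrow> Cn_on n S f \<Longrightarrow> Cn_on n S (\<lambda>x. L (f x))"
proof (induction n arbitrary: f)
  case 0 then show ?case
    by (auto intro: continuous_on_compose2[of UNIV L] linear_continuous_on)
next
  case (Suc n)
  obtain f' where df: "\<And>x. x \<in> S \<Longrightarrow> (f has_derivative f' x) (at x)"
    and cf: "\<And>v. Cn_on n S (\<lambda>x. f' x v)" by (rule CnSucE[OF Suc.prems(2)]) blast
  show ?case
    by (rule CnSucI[of S _ "\<lambda>x v. L (f' x v)"])
      (rule bounded_linear.has_derivative[OF Suc.prems(1) df], assumption, rule Suc.IH[OF Suc.prems(1) cf])
qed

lemma Cn_blin: assumes L: "bounded_linear L" shows "Cn_on n S L"
proof (cases n)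
  case 0 then show ?thesis
    using L by (auto intro: linear_continuous_on)
next
  case (Suc m)
  show ?thesis unfolding Suc
    by (rule CnSucI[of S _ "\<lambda>x. L"]) (rule bounded_linear_imp_has_derivative[OF L], rule Cn_const)
qed

lemma Cn_id: "Cn_on n S (\<lambda>x. x)"
  using Cn_blin[of "\<lambda>x. x"] bounded_linear_ident by auto

lemma Cn_scaleR: "Cn_on n S a \<Longrightarrow> Cn_on n S f \<Longrightarrow> Cn_on n S (\<lambda>x. a x *\<^sub>R f x)"
proof (induction n arbitrary: a f)
  case 0 then show ?case by (auto intro: continuous_on_scaleR)
next
  case (Suc n)
  obtain a' where da: "\<And>x. x \<in> S \<Longrightarrow> (a has_derivative a' x) (at x)"
    and ca: "\<And>v. Cn_on n S (\<lambda>x. a' x v)" by (rule CnSucE[OF Suc.prems(1)]) blast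
  obtain f' where df: "\<And>x. x \<in> S \<Longrightarrow> (f has_derivative f' x) (at x)"
    and cf: "\<And>v. Cn_on n S (\<lambda>x. f' x v)" by (rule CnSucE[OF Suc.prems(2)]) blast
  have an: "Cn_on n S a" "Cn_on n S f" using Suc.prems Cn_Suc_mono by blast+
  show ?case
    by (rule CnSucI[of S _ "\<lambda>x v. a x *\<^sub>R f' x v + a' x v *\<^sub>R f x"])
      (rule has_derivative_scaleR[OF da df], assumption+,
       rule Cn_add[OF Suc.IH[OF an(1) cf] Suc.IH[OF ca an(2)]])
qed

lemma Cn_mult: "Cn_on n S (a::_\<Rightarrow>real) \<Longrightarrow> Cn_on n S b \<Longrightarrow> Cn_on n S (\<lambda>x. a x * b x)"
  using Cn_scaleR[of n S a b] by simp

lemma Cn_sum: "finite A \<Longrightarrow> (\<And>i. i \<in> A \<Longrightarrow> Cn_on n S (f i)) \<Longrightarrow> Cn_on n S (\<lambda>x. \<Sum>i\<in>A. f i x)"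
proof (induction A rule: finite_induct)
  case empty then show ?case using Cn_const by simp
next
  case (insert a A) then show ?case using Cn_add[of n S "f a"] by simp
qed

lemma Cn_comp:
  fixes h :: "'b::euclidean_space \<Rightarrow> 'c::euclidean_space" and g :: "'a::euclidean_space \<Rightarrow> 'b"
  shows "Cn_on n T h \<Longrightarrow> Cn_on n S g \<Longrightarrow> g ` S \<subseteq> T \<Longrightarrow> Cn_on n S (\<lambda>x. h (g x))"
proof (induction n arbitrary: h g)
  case 0 then show ?case by (auto intro: continuous_on_compose2)
next
  case (Suc n)
  obtain h' where dh: "\<And>y. y \<in> T \<Longrightarrow> (h has_derivative h' y) (at y)"
    and ch: "\<And>v. Cn_on n T (\<lambda>y. h' y v)" by (rule CnSucE[OF Suc.prems(1)]) blast
  obtain g' where dg: "\<And>x. x \<in> S \<Longrightarrow> (g has_derivative g' x) (at x)"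
    and cg: "\<And>v. Cn_on n S (\<lambda>x. g' x v)" by (rule CnSucE[OF Suc.prems(2)]) blast
  have gn: "Cn_on n S g" using Suc.prems Cn_Suc_mono by blast
  define D where "D = (\<lambda>x v. \<Sum>b\<in>(Basis::'b set). (g' x v \<bullet> b) *\<^sub>R h' (g x) b)"
  have "((\<lambda>x. h (g x)) has_derivative D x) (at x)" if x: "x \<in> S" for x
  proof -
    have gx: "g x \<in> T" using x Suc.prems by auto
    have lin: "linear (h' (g x))" using dh[OF gx] has_derivative_linear by blast
    have eq: "D x = (\<lambda>v. h' (g x) (g' x v))"
    proof
      fix v
      have "h' (g x) (g' x v) = h' (g x) (\<Sum>b\<in>Basis. (g' x v \<bullet> b) *\<^sub>R b)"
        by (simp add: euclidean_representation)
      also have "\<dots> = D x v" unfolding D_def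
        using lin by (simp add: linear_sum linear_scale)
      finally show "D x v = h' (g x) (g' x v)" by simp
    qed
    show ?thesis unfolding eq
      using diff_chain_at[OF dg[OF x] dh[OF gx]]
      by (simp add: o_def)
  qed
  moreover have "Cn_on n S (\<lambda>x. D x v)" for v
    unfolding D_def
  proof (rule Cn_sum, simp)
    fix b :: 'b assume "b \<in> Basis"
    show "Cn_on n S (\<lambda>x. (g' x v \<bullet> b) *\<^sub>R h' (g x) b)"
    proof (rule Cn_scaleR)
      show "Cn_on n S (\<lambda>x. g' x v \<bullet> b)"
        using Cn_linear[OF bounded_linear_inner_left cg] .
      show "Cn_on n S (\<lambda>x. h' (g x) b)"
        using Suc.IH[OF ch gn Suc.prems(3)] .
    qed
  qed
  ultimately show ?case by (rule CnSucI)
qed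

lemma Cn_inverse:
  "Cn_on n S (a::_\<Rightarrow>real) \<Longrightarrow> (\<And>x. x \<in> S \<Longrightarrow> a x \<noteq> 0) \<Longrightarrow> Cn_on n S (\<lambda>x. inverse (a x))"
proof (induction n arbitrary: a)
  case 0 then show ?case by (auto intro: continuous_on_inverse)
next
  case (Suc n)
  obtain a' where da: "\<And>x. x \<in> S \<Longrightarrow> (a has_derivative a' x) (at x)"
    and ca: "\<And>v. Cn_on n S (\<lambda>x. a' x v)" by (rule CnSucE[OF Suc.prems(1)]) blast
  have an: "Cn_on n S a" using Suc.prems Cn_Suc_mono by blast
  have iv: "Cn_on n S (\<lambda>x. inverse (a x))" using Suc.IH[OF an] Suc.prems by blast
  show ?case
    by (rule CnSucI[of S _ "\<lambda>x v. - (inverse (a x) * a' x v * inverse (a x))"])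
      (rule Deriv.has_derivative_inverse[OF Suc.prems(2) da], assumption+,
       rule Cn_linear[OF bounded_linear_minus[OF bounded_linear_ident]],
       rule Cn_mult[OF Cn_mult[OF iv ca] iv])
qed

lemma sm_Cn: "smooth_on S f \<Longrightarrow> Cn_on n S f" unfolding smooth_on_def by blast
lemma smI: "(\<And>n. Cn_on n S f) \<Longrightarrow> smooth_on S f" unfolding smooth_on_def by blast

lemma sm_cont: "smooth_on S f \<Longrightarrow> continuous_on S f"
  using sm_Cn[of S f 0] by simp

lemma sm_const: "smooth_on S (\<lambda>x. c)" by (rule smI, rule Cn_const)
lemma sm_id: "smooth_on S (\<lambda>x. x)" by (rule smI, rule Cn_id)
lemma sm_add: "smooth_on S f \<Longrightarrow> smooth_on S g \<Longrightarrow> smooth_on S (\<lambda>x. f x + g x)"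
  by (rule smI, rule Cn_add; erule sm_Cn)
lemma sm_scaleR: "smooth_on S a \<Longrightarrow> smooth_on S f \<Longrightarrow> smooth_on S (\<lambda>x. a x *\<^sub>R f x)"
  by (rule smI, rule Cn_scaleR; erule sm_Cn)
lemma sm_mult: "smooth_on S (a::_\<Rightarrow>real) \<Longrightarrow> smooth_on S b \<Longrightarrow> smooth_on S (\<lambda>x. a x * b x)"
  by (rule smI, rule Cn_mult; erule sm_Cn)
lemma sm_linear: "bounded_linear L \<Longrightarrow> smooth_on S f \<Longrightarrow> smooth_on S (\<lambda>x. L (f x))"
  by (rule smI, rule Cn_linear, assumption, erule sm_Cn)
lemma sm_blin: "bounded_linear L \<Longrightarrow> smooth_on S L"
  by (rule smI, rule Cn_blin)
lemma sm_comp: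
  fixes h :: "'b::euclidean_space \<Rightarrow> 'c::euclidean_space" and g :: "'a::euclidean_space \<Rightarrow> 'b"
  shows "smooth_on T h \<Longrightarrow> smooth_on S g \<Longrightarrow> g ` S \<subseteq> T \<Longrightarrow> smooth_on S (\<lambda>x. h (g x))"
  by (rule smI, rule Cn_comp, erule sm_Cn, erule sm_Cn, assumption)
lemma sm_inverse: "smooth_on S (a::_\<Rightarrow>real) \<Longrightarrow> (\<And>x. x \<in> S \<Longrightarrow> a x \<noteq> 0) \<Longrightarrow> smooth_on S (\<lambda>x. inverse (a x))"
  by (rule smI, rule Cn_inverse, erule sm_Cn)
lemma sm_subset: "smooth_on S f \<Longrightarrow> T \<subseteq> S \<Longrightarrow> smooth_on T f"
  by (rule smI, rule Cn_subset, erule sm_Cn)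
lemma sm_minus: "smooth_on S f \<Longrightarrow> smooth_on S (\<lambda>x. - f x)"
  using sm_linear[OF bounded_linear_minus[OF bounded_linear_ident]] by blast
lemma sm_diff: "smooth_on S f \<Longrightarrow> smooth_on S g \<Longrightarrow> smooth_on S (\<lambda>x. f x - g x)"
  using sm_add[of S f "\<lambda>x. - g x"] sm_minus by auto
lemma sm_divide: "smooth_on S (a::_\<Rightarrow>real) \<Longrightarrow> smooth_on S b \<Longrightarrow> (\<And>x. x \<in> S \<Longrightarrow> b x \<noteq> 0) \<Longrightarrow> smooth_on S (\<lambda>x. a x / b x)"
  unfolding divide_inverse by (rule sm_mult, assumption, rule sm_inverse)
lemma sm_fst: "smooth_on S fst" by (rule sm_blin, rule bounded_linear_fst)
lemma sm_snd: "smooth_on S snd" by (rule sm_blin, rule bounded_linear_snd)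
lemma sm_fst': "smooth_on S f \<Longrightarrow> smooth_on S (\<lambda>x. fst (f x))"
  by (rule sm_linear[OF bounded_linear_fst])
lemma sm_snd': "smooth_on S f \<Longrightarrow> smooth_on S (\<lambda>x. snd (f x))"
  by (rule sm_linear[OF bounded_linear_snd])
lemma sm_pair: "smooth_on S f \<Longrightarrow> smooth_on S g \<Longrightarrow> smooth_on S (\<lambda>x. (f x, g x))"
proof -
  assume f: "smooth_on S f" and g: "smooth_on S g"
  have 1: "smooth_on S (\<lambda>x. (f x, 0))"
    by (rule sm_linear[OF bounded_linear_Pair[OF bounded_linear_ident bounded_linear_zero] f])
  have 2: "smooth_on S (\<lambda>x. (0, g x))"
    by (rule sm_linear[OF bounded_linear_Pair[OF bounded_linear_zero bounded_linear_ident] g])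
  show ?thesis using sm_add[OF 1 2] by simp
qed
lemma sm_power: "smooth_on S (a::_\<Rightarrow>real) \<Longrightarrow> smooth_on S (\<lambda>x. a x ^ m)"
  by (induction m) (auto intro: sm_const sm_mult)

lemma smooth_by_deriv:
  assumes d: "\<And>x. x \<in> S \<Longrightarrow> (f has_derivative D x) (at x)"
    and s: "\<And>w. smooth_on S (\<lambda>x. D x w)"
  shows "smooth_on S f"
proof (rule smI)
  fix n show "Cn_on n S f"
  proof (cases n)
    case 0 then show ?thesis using d
      by (auto intro!: continuous_at_imp_continuous_on has_derivative_continuous)
  next
    case (Suc m) show ?thesis unfolding Suc
      by (rule CnSucI[OF d]) (assumption, rule sm_Cn[OF s])
  qed
qed

lemma smooth_local_inverse:
  fixes T :: "'a::euclidean_space \<Rightarrow> 'a"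
  assumes S: "open S" "x0 \<in> S"
    and dT: "\<And>x. x \<in> S \<Longrightarrow> (T has_derivative D x) (at x)"
    and inv: "\<And>x w. x \<in> S \<Longrightarrow> D x (L x w) = w"
    and linL: "\<And>x. x \<in> S \<Longrightarrow> linear (L x)"
    and cD: "\<And>w. continuous_on S (\<lambda>x. D x w)"
    and sL: "\<And>w. smooth_on S (\<lambda>x. L x w)"
  obtains U V g where "open U" "x0 \<in> U" "U \<subseteq> S" "open V" "T ` U = V" "g ` V = U"
    "\<And>x. x \<in> U \<Longrightarrow> g (T x) = x" "\<And>y. y \<in> V \<Longrightarrow> T (g y) = y" "smooth_on V g"
proof -
  define f' where "f' = (\<lambda>x. Blinfun (D x))"
  have blD: "bounded_linear (D x)" if "x \<in> S" for x
    using dT[OF that] has_derivative_bounded_linear by blast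
  have f'a: "blinfun_apply (f' x) = D x" if "x \<in> S" for x
    unfolding f'_def using bounded_linear_Blinfun_apply[OF blD[OF that]] .
  have derf: "\<And>x. x \<in> S \<Longrightarrow> (T has_derivative blinfun_apply (f' x)) (at x)"
    using dT f'a by simp
  have contf: "continuous_on S f'"
  proof (rule continuous_on_blinfun_componentwise)
    fix i :: 'a assume "i \<in> Basis"
    show "continuous_on S (\<lambda>x. blinfun_apply (f' x) i)"
      by (rule continuous_on_eq[OF cD[of i]]) (simp add: f'a)
  qed
  have blL: "bounded_linear (L x0)" using linL[OF S(2)] linear_conv_bounded_linear by auto
  have "D x0 \<circ> L x0 = id" using inv S(2) by auto
  then have "L x0 \<circ> D x0 = id"
    using linear_inverse_left[of "D x0" "L x0"] blD[OF S(2)] linL[OF S(2)]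
    by (simp add: bounded_linear.linear)
  then have LD: "L x0 (D x0 w) = w" for w by (metis comp_apply id_apply)
  define invf where "invf = Blinfun (L x0)"
  have id: "invf o\<^sub>L f' x0 = id_blinfun"
    by (rule blinfun_eqI) (simp add: invf_def f'a[OF S(2)] bounded_linear_Blinfun_apply[OF blL] LD)
  obtain U V g g' where U: "open U" "U \<subseteq> S" "x0 \<in> U" "open V" "T x0 \<in> V"
    and hom: "homeomorphism U V T g"
    and dg: "\<And>y. y \<in> V \<Longrightarrow> (g has_derivative (g' y)) (at y)"
    and g': "\<And>y. y \<in> V \<Longrightarrow> g' y = inv (blinfun_apply (f'(g y)))"
    and bij: "\<And>y. y \<in> V \<Longrightarrow> bij (blinfun_apply (f'(g y)))"
    using inverse_function_theorem[OF S(1) derf contf S(2) id] by metis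
  have hm: "\<And>x. x \<in> U \<Longrightarrow> g (T x) = x" "T ` U = V" "continuous_on U T"
     "\<And>y. y \<in> V \<Longrightarrow> T (g y) = y" "g ` V = U" "continuous_on V g"
    using hom unfolding homeomorphism_def by auto
  have gS: "g y \<in> S" if "y \<in> V" for y using hm(5) U(2) that by auto
  have g'eq: "g' y = L (g y)" if y: "y \<in> V" for y
  proof
    fix w
    have "g' y w = inv (D (g y)) (D (g y) (L (g y) w))"
      using g'[OF y] f'a[OF gS[OF y]] inv[OF gS[OF y]] by simp
    also have "\<dots> = L (g y) w"
      using bij[OF y] f'a[OF gS[OF y]] by (simp add: bij_is_inj)
    finally show "g' y w = L (g y) w" .
  qed
  have dg2: "\<And>y. y \<in> V \<Longrightarrow> (g has_derivative L (g y)) (at y)"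
    using dg g'eq by metis
  have "Cn_on n V g" for n
  proof (induction n)
    case 0 then show ?case using hm(6) by simp
  next
    case (Suc n)
    show ?case
    proof (rule CnSucI[OF dg2])
      fix w
      show "Cn_on n V (\<lambda>y. L (g y) w)"
        by (rule Cn_comp[OF sm_Cn[OF sL] Suc.IH]) (use gS in auto)
    qed
  qed
  then have "smooth_on V g" by (rule smI)
  show ?thesis
    by (rule that[OF U(1) U(3) U(2) U(4) hm(2) hm(5) hm(1) hm(4) \<open>smooth_on V g\<close>])
qed

lemma oint_vderiv:
  fixes h :: "real \<Rightarrow> 'a::euclidean_space"
  assumes I: "open I" "is_interval I" "0 \<in> I" and c: "continuous_on I h" and u: "u \<in> I"
  shows "((\<lambda>s. oint 0 s h) has_vector_derivative h u) (at u)"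
proof -
  obtain e1 where e1: "e1 > 0" "ball u e1 \<subseteq> I" using I(1) u open_contains_ball by blast
  obtain e2 where e2: "e2 > 0" "ball 0 e2 \<subseteq> I" using I(1) I(3) open_contains_ball by blast
  define e where "e = min e1 e2"
  have e: "e > 0" "ball u e \<subseteq> I" "ball 0 e \<subseteq> I" using e1 e2 unfolding e_def by auto
  define a where "a = min 0 u - e/2"
  define b where "b = max 0 u + e/2"
  have aI: "a \<in> I"
  proof (cases "u \<le> 0")
    case True then have "a \<in> ball u e" using e unfolding a_def by (auto simp: dist_real_def)
    then show ?thesis using e by auto
  next
    case False then have "a \<in> ball 0 e" using e unfolding a_def by (auto simp: dist_real_def)
    then show ?thesis using e by auto
  qed
  have bI: "b \<in> I"
  proof (cases "u \<le> 0")
    case True then have "b \<in> ball 0 e" using e unfolding b_def by (auto simp: dist_real_def)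
    then show ?thesis using e by auto
  next
    case False then have "b \<in> ball u e" using e unfolding b_def by (auto simp: dist_real_def)
    then show ?thesis using e by auto
  qed
  have ab: "{a..b} \<subseteq> I" using mem_is_interval_1_I[OF I(2) aI bI] by auto
  have cab: "continuous_on {a..b} h" using continuous_on_subset[OF c ab] .
  have a0: "a \<le> 0" "0 \<le> b" "a < u" "u < b" using e unfolding a_def b_def by auto
  have eq: "oint 0 s h = integral {a..s} h - integral {a..0} h" if s: "s \<in> {a..b}" for s
  proof (cases "0 \<le> s")
    case True
    have int: "h integrable_on {a..s}"
      by (rule integrable_continuous_real, rule continuous_on_subset[OF cab]) (use s in auto)
    have "integral {a..0} h + integral {0..s} h = integral {a..s} h"
      by (rule Henstock_Kurzweil_Integration.integral_combine[OF a0(1) True int])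
    then show ?thesis unfolding oint_def using True by (simp add: algebra_simps)
  next
    case False
    have int: "h integrable_on {a..0}"
      by (rule integrable_continuous_real, rule continuous_on_subset[OF cab]) (use a0 in auto)
    have "integral {a..s} h + integral {s..0} h = integral {a..0} h"
      by (rule Henstock_Kurzweil_Integration.integral_combine[OF _ _ int]) (use s False in auto)
    then show ?thesis unfolding oint_def using False by (simp add: algebra_simps)
  qed
  have "((\<lambda>s. integral {a..s} h) has_vector_derivative h u) (at u within {a..b})"
    by (rule integral_has_vector_derivative[OF cab]) (use a0 in auto)
  then have "((\<lambda>s. integral {a..s} h) has_vector_derivative h u) (at u within {a<..<b})"
    by (rule has_vector_derivative_within_subset) auto
  then have "((\<lambda>s. integral {a..s} h) has_vector_derivative h u) (at u)"
    using at_within_open[of u "{a<..<b}"] a0 by auto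
  then have "((\<lambda>s. integral {a..s} h - integral {a..0} h) has_vector_derivative h u - 0) (at u)"
    by (intro has_vector_derivative_diff has_vector_derivative_const)
  then have d: "((\<lambda>s. integral {a..s} h - integral {a..0} h) has_vector_derivative h u) (at u)"
    by simp
  show ?thesis
    by (rule has_vector_derivative_transform_within_open[OF d, of "{a<..<b}"]) (use a0 eq in auto)
qed

lemma G_formula:
  fixes k :: nat and v :: real
  assumes k: "k \<ge> 1"
  shows "(1/2) *\<^sub>R oint 0 v (\<lambda>t. t *\<^sub>R (1 + (t ^ (2*k-1))\<^sup>2, 1 - (t ^ (2*k-1))\<^sup>2, - 2 * t ^ (2*k-1)))
    = (v\<^sup>2/4 + (v\<^sup>2)^(2*k)/(8*k), v\<^sup>2/4 - (v\<^sup>2)^(2*k)/(8*k), - (v^(2*k+1))/(2*k+1))"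
proof -
  obtain m where m: "k = Suc m" using k by (cases k) auto
  define Q where "Q = (\<lambda>t::real. (t^2/real 2 + t^(4*m+4)/real (4*m+4), t^2/real 2 - t^(4*m+4)/real (4*m+4), -2 * (t^(2*m+3)/real (2*m+3))))"
  define q where "q = (\<lambda>t::real. t *\<^sub>R (1 + (t ^ (2*k-1))\<^sup>2, 1 - (t ^ (2*k-1))\<^sup>2, - 2 * t ^ (2*k-1)))"
  have q: "q t = (t^(2-1) + t^(4*m+4-1), t^(2-1) - t^(4*m+4-1), -2 * t^(2*m+3-1))" for t
  proof -
    have e1: "2*k-1 = 2*m+1" using m by simp
    have e2: "(t^(2*m+1))^2 = t^((2*m+1)*2)" by (rule power_mult[symmetric])
    have e3: "(2*m+1)*2 = 4*m+2" by simp
    have e4: "t^(Suc (4*m+2)) = t * t^(4*m+2)" by (rule power_Suc)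
    have e5: "4*m+4-1 = Suc (4*m+2)" by simp
    have e6: "t^(Suc (2*m+1)) = t * t^(2*m+1)" by (rule power_Suc)
    have e7: "2*m+3-1 = Suc (2*m+1)" by simp
    show ?thesis unfolding q_def e1 e2 e3 e5 e7 e4 e6
      by (simp add: algebra_simps)
  qed
  have p: "((\<lambda>t::real. t^n/real n) has_real_derivative t^(n-1)) (at t within X)" if "n > 0" for n t X
    using DERIV_cdivide[OF DERIV_pow[of n t X], of "real n"] that by simp
  have dQ: "(Q has_vector_derivative q t) (at t within X)" for t X
  proof -
    have d1: "((\<lambda>t::real. t^2/real 2 + t^(4*m+4)/real (4*m+4)) has_real_derivative (t^(2-1) + t^(4*m+4-1))) (at t within X)"
      by (intro DERIV_add p) auto
    have d2: "((\<lambda>t::real. t^2/real 2 - t^(4*m+4)/real (4*m+4)) has_real_derivative (t^(2-1) - t^(4*m+4-1))) (at t within X)"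
      by (intro DERIV_diff p) auto
    have d3: "((\<lambda>t::real. -2 * (t^(2*m+3)/real (2*m+3))) has_real_derivative (-2 * t^(2*m+3-1))) (at t within X)"
      by (intro DERIV_cmult p) auto
    show ?thesis unfolding Q_def q
      by (intro has_vector_derivative_Pair d1[unfolded has_real_derivative_iff_has_vector_derivative]
          d2[unfolded has_real_derivative_iff_has_vector_derivative]
          d3[unfolded has_real_derivative_iff_has_vector_derivative])
  qed
  have "oint 0 v q = Q v - Q 0"
  proof (cases "0 \<le> v")
    case True
    have "(q has_integral (Q v - Q 0)) {0..v}"
      by (rule fundamental_theorem_of_calculus[OF True dQ])
    then show ?thesis unfolding oint_def using True by (simp add: integral_unique)
  next
    case False
    have "(q has_integral (Q 0 - Q v)) {v..0}"
      by (rule fundamental_theorem_of_calculus[OF _ dQ]) (use False in auto)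
    then show ?thesis unfolding oint_def using False by (simp add: integral_unique)
  qed
  moreover have "Q 0 = 0" unfolding Q_def by (simp add: zero_prod_def)
  ultimately have oQ: "oint 0 v q = Q v" by simp
  have e: "(v^2)^(2*k) = v^(4*m+4)"
  proof -
    have "(v^2)^(2*k) = v^(2*(2*k))" by (rule power_mult[symmetric])
    also have "2*(2*k) = 4*m+4" using m by simp
    finally show ?thesis .
  qed
  have e': "2*k+1 = 2*m+3" using m by simp
  have nz: "4 * real m + 4 \<noteq> 0" "2 * real m + 3 \<noteq> 0" "real m + 1 \<noteq> 0" "8 * real m + 8 \<noteq> 0" by linarith+
  show ?thesis unfolding q_def[symmetric] oQ Q_def e e'
    using nz by (simp add: m field_simps)
qed

definition hF :: "(real \<Rightarrow> real) \<Rightarrow> (real \<Rightarrow> real) \<Rightarrow> real \<Rightarrow> real \<times> real \<times> real" where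
  "hF g1 w1 = (\<lambda>s. w1 s *\<^sub>R (- 1 - (g1 s)\<^sup>2, 1 - (g1 s)\<^sup>2, 2 * g1 s))"

definition FF :: "(real \<Rightarrow> real) \<Rightarrow> (real \<Rightarrow> real) \<Rightarrow> real \<Rightarrow> real \<times> real \<times> real" where
  "FF g1 w1 s = (1/2) *\<^sub>R oint 0 s (hF g1 w1)"

definition PP :: "nat \<Rightarrow> real \<Rightarrow> real \<Rightarrow> real \<times> real \<times> real" where
  "PP k q r = (q/4 + q^(2*k)/(8*k), q/4 - q^(2*k)/(8*k), - r/(2*k+1))"

definition Th :: "(real \<Rightarrow> real) \<Rightarrow> (real \<Rightarrow> real) \<Rightarrow> nat \<Rightarrow> real \<times> real \<times> real \<Rightarrow> real \<times> real \<times> real" where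
  "Th g1 w1 k x = FF g1 w1 (fst x) + PP k (fst (snd x)) (snd (snd x))"

definition H1 :: "(real \<Rightarrow> real) \<Rightarrow> (real \<Rightarrow> real) \<Rightarrow> real \<times> real \<times> real \<Rightarrow> real" where
  "H1 g1 w1 x = (1/2) * (w1 (fst x) * (- 1 - (g1 (fst x))\<^sup>2))"
definition H2 :: "(real \<Rightarrow> real) \<Rightarrow> (real \<Rightarrow> real) \<Rightarrow> real \<times> real \<times> real \<Rightarrow> real" where
  "H2 g1 w1 x = (1/2) * (w1 (fst x) * (1 - (g1 (fst x))\<^sup>2))"
definition H3 :: "(real \<Rightarrow> real) \<Rightarrow> (real \<Rightarrow> real) \<Rightarrow> real \<times> real \<times> real \<Rightarrow> real" where
  "H3 g1 w1 x = (1/2) * (w1 (fst x) * (2 * g1 (fst x)))"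
definition MM :: "nat \<Rightarrow> real \<times> real \<times> real \<Rightarrow> real" where "MM k x = (fst (snd x))^(2*k-1) / 4"
definition DL where "DL g1 w1 k x = H1 g1 w1 x * (1/4 - MM k x) - H2 g1 w1 x * (1/4 + MM k x)"

definition DD where "DD g1 w1 k x w =
  (fst w * H1 g1 w1 x + (fst (snd w) / 4 + MM k x * fst (snd w)),
   fst w * H2 g1 w1 x + (fst (snd w) / 4 - MM k x * fst (snd w)),
   fst w * H3 g1 w1 x + (- snd (snd w) / (2*k+1)))"

definition LL where "LL g1 w1 k x w =
  ((fst w * (1/4 - MM k x) - fst (snd w) * (1/4 + MM k x)) / DL g1 w1 k x,
   (H1 g1 w1 x * fst (snd w) - H2 g1 w1 x * fst w) / DL g1 w1 k x,
   (2*k+1) * ((fst w * (1/4 - MM k x) - fst (snd w) * (1/4 + MM k x)) / DL g1 w1 k x * H3 g1 w1 x - snd (snd w)))"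

lemma wsurf_Th:
  assumes "k \<ge> 1"
  shows "wsurf g1 w1 (\<lambda>v. v ^ (2 * k - 1)) (\<lambda>v. v) x = Th g1 w1 k (cuspidal_edge k x)"
proof -
  obtain u v where x: "x = (u, v)" by (cases x)
  show ?thesis
    unfolding x wsurf_def cuspidal_edge_def Th_def FF_def hF_def PP_def
    using G_formula[OF assms, of v] by simp
qed

lemma DD_LL:
  assumes "DL g1 w1 k x \<noteq> 0"
  shows "DD g1 w1 k x (LL g1 w1 k x w) = w"
proof -
  obtain a b c where w: "w = (a, b, c)" by (cases w) auto
  define h1 where "h1 = H1 g1 w1 x"
  define h2 where "h2 = H2 g1 w1 x"
  define h3 where "h3 = H3 g1 w1 x"
  define m where "m = MM k x"
  define d where "d = DL g1 w1 k x"
  have d: "d = h1 * (1/4 - m) - h2 * (1/4 + m)" "d \<noteq> 0"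
    using assms unfolding d_def h1_def h2_def m_def DL_def by auto
  have K: "real (2*k+1) \<noteq> 0" by simp
  define X where "X = a * (1/4 - m) - b * (1/4 + m)"
  define Y where "Y = h1 * b - h2 * a"
  have n1: "X * h1 + Y * (1/4 + m) = a * d" unfolding X_def Y_def d(1) by (simp add: algebra_simps)
  have n2: "X * h2 + Y * (1/4 - m) = b * d" unfolding X_def Y_def d(1) by (simp add: algebra_simps)
  have e1: "X / d * h1 + (Y / d / 4 + m * (Y / d)) = a"
  proof -
    have "X / d * h1 + (Y / d / 4 + m * (Y / d)) = (X * h1 + Y * (1/4 + m)) / d"
      using d(2) by (simp add: field_simps)
    also have "\<dots> = a" using n1 d(2) by simp
    finally show ?thesis .
  qed
  have e2: "X / d * h2 + (Y / d / 4 - m * (Y / d)) = b"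
  proof -
    have "X / d * h2 + (Y / d / 4 - m * (Y / d)) = (X * h2 + Y * (1/4 - m)) / d"
      using d(2) by (simp add: field_simps)
    also have "\<dots> = b" using n2 d(2) by simp
    finally show ?thesis .
  qed
  have e3: "X / d * h3 + (- ((2*k+1) * (X / d * h3 - c)) / (2*k+1)) = c"
  proof -
    have gen: "\<And>Z K c. (K::real) \<noteq> 0 \<Longrightarrow> Z + (- (K * (Z - c)) / K) = c" by (simp add: field_simps)
    show ?thesis by (rule gen) simp
  qed
  show ?thesis unfolding DD_def LL_def w
    using e1 e2 e3 unfolding X_def Y_def h1_def h2_def h3_def m_def d_def by simp
qed

lemma sm_hF:
  assumes "smooth_on I g1" "smooth_on I w1"
  shows "smooth_on I (hF g1 w1)"
  unfolding hF_def using assms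
  by (auto intro!: sm_scaleR sm_pair sm_diff sm_const sm_power sm_mult)

lemma Th_deriv:
  assumes I: "open I" "is_interval I" "0 \<in> I" and g: "smooth_on I g1" "smooth_on I w1"
    and x: "fst x \<in> I" and k: "k \<ge> 1"
  shows "(Th g1 w1 k has_derivative DD g1 w1 k x) (at x)"
proof -
  define s where "s = fst x"
  define q where "q = fst (snd x)"
  have cF: "continuous_on I (hF g1 w1)" using sm_cont[OF sm_hF[OF g]] .
  have vF0: "((\<lambda>s. oint 0 s (hF g1 w1)) has_vector_derivative hF g1 w1 s) (at s)"
    by (rule oint_vderiv[OF I cF]) (use x s_def in simp)
  have vF: "(FF g1 w1 has_vector_derivative (1/2) *\<^sub>R hF g1 w1 s) (at s)"
    using has_vector_derivative_scaleR[OF DERIV_const vF0, of "1/2"] unfolding FF_def[abs_def] by simp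
  have dF: "((\<lambda>x. FF g1 w1 (fst x)) has_derivative (\<lambda>w. fst w *\<^sub>R ((1/2) *\<^sub>R hF g1 w1 s))) (at x)"
    using has_derivative_compose[OF has_derivative_fst[OF has_derivative_ident] vF[unfolded has_vector_derivative_def s_def]]
    unfolding s_def .
  have kk: "real k \<noteq> 0" using k by simp
  have p1: "((\<lambda>q::real. q/4 + q^(2*k)/(8*k)) has_real_derivative (1/4 + q^(2*k-1)/4)) (at q)"
  proof (rule DERIV_cong)
    show "((\<lambda>q::real. q/4 + q^(2*k)/(8*k)) has_real_derivative (1/4 + real (2*k) * q^(2*k - Suc 0)/(8*k))) (at q)"
      by (intro DERIV_add DERIV_cdivide DERIV_ident DERIV_pow)
    show "1/4 + real (2*k) * q^(2*k - Suc 0)/(8*k) = 1/4 + q^(2*k-1)/4"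
      using kk by (simp add: field_simps)
  qed
  have p2: "((\<lambda>q::real. q/4 - q^(2*k)/(8*k)) has_real_derivative (1/4 - q^(2*k-1)/4)) (at q)"
  proof (rule DERIV_cong)
    show "((\<lambda>q::real. q/4 - q^(2*k)/(8*k)) has_real_derivative (1/4 - real (2*k) * q^(2*k - Suc 0)/(8*k))) (at q)"
      by (intro DERIV_diff DERIV_cdivide DERIV_ident DERIV_pow)
    show "1/4 - real (2*k) * q^(2*k - Suc 0)/(8*k) = 1/4 - q^(2*k-1)/4"
      using kk by (simp add: field_simps)
  qed
  have p3: "((\<lambda>r::real. - r/(2*k+1)) has_real_derivative (-1/(2*k+1))) (at r)" for r
    by (intro DERIV_cdivide DERIV_minus DERIV_ident)
  have c2: "((\<lambda>x::real\<times>real\<times>real. fst (snd x)) has_derivative (\<lambda>w. fst (snd w))) (at x)"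
    by (intro has_derivative_fst has_derivative_snd has_derivative_ident)
  have c3: "((\<lambda>x::real\<times>real\<times>real. snd (snd x)) has_derivative (\<lambda>w. snd (snd w))) (at x)"
    by (intro has_derivative_snd has_derivative_ident)
  have dP: "((\<lambda>x. PP k (fst (snd x)) (snd (snd x))) has_derivative
      (\<lambda>w. ((1/4 + q^(2*k-1)/4) * fst (snd w), (1/4 - q^(2*k-1)/4) * fst (snd w),
             (-1/(2*k+1)) * snd (snd w)))) (at x)"
    unfolding PP_def
    apply (intro has_derivative_Pair)
    using has_derivative_compose[OF c2 p1[unfolded has_field_derivative_def q_def]]
      has_derivative_compose[OF c2 p2[unfolded has_field_derivative_def q_def]]
      has_derivative_compose[OF c3 p3[unfolded has_field_derivative_def]]
    unfolding q_def by auto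
  show ?thesis
    unfolding Th_def[abs_def]
  proof (rule has_derivative_eq_rhs[OF has_derivative_add[OF dF dP]])
    show "(\<lambda>w. fst w *\<^sub>R ((1/2) *\<^sub>R hF g1 w1 s) +
      ((1/4 + q^(2*k-1)/4) * fst (snd w), (1/4 - q^(2*k-1)/4) * fst (snd w), (-1/(2*k+1)) * snd (snd w)))
      = DD g1 w1 k x"
      unfolding DD_def hF_def H1_def H2_def H3_def MM_def s_def q_def
      by (auto simp: fun_eq_iff algebra_simps)
  qed
qed

lemma main_point:
  fixes k :: nat and g1 w1 :: "real \<Rightarrow> real" and I :: "real set"
  assumes k: "k \<ge> 1" and I: "open I" "is_interval I" "0 \<in> I"
    and g: "smooth_on I g1" "smooth_on I w1"
    and u0: "u0 \<in> I" "w1 u0 \<noteq> 0"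
  shows "A_equivalent (wsurf g1 w1 (\<lambda>v. v ^ (2 * k - 1)) (\<lambda>v. v)) (u0, 0) (cuspidal_edge k) (0, 0)"
proof -
  define S0 :: "(real \<times> real \<times> real) set" where "S0 = fst -` I"
  have oS0: "open S0" unfolding S0_def using I(1) by (rule open_vimage_fst)
  have g1S: "smooth_on S0 (\<lambda>x. g1 (fst x))" by (rule sm_comp[OF g(1) sm_fst]) (auto simp: S0_def)
  have w1S: "smooth_on S0 (\<lambda>x. w1 (fst x))" by (rule sm_comp[OF g(2) sm_fst]) (auto simp: S0_def)
  have smH0: "smooth_on S0 (H1 g1 w1)" "smooth_on S0 (H2 g1 w1)" "smooth_on S0 (H3 g1 w1)" "smooth_on S0 (MM k)"
    unfolding H1_def[abs_def] H2_def[abs_def] H3_def[abs_def] MM_def[abs_def]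
    using g1S w1S by (auto intro!: sm_mult sm_const sm_diff sm_power sm_divide sm_fst' sm_snd)
  have smDL0: "smooth_on S0 (DL g1 w1 k)"
    unfolding DL_def[abs_def] using smH0 by (auto intro!: sm_mult sm_const sm_diff sm_add)
  define S where "S = DL g1 w1 k -` (-{0}) \<inter> S0"
  have oS: "open S"
    using continuous_on_open_vimage[OF oS0, of "DL g1 w1 k"] sm_cont[OF smDL0] unfolding S_def
    by (simp add: open_Compl)
  have SS0: "S \<subseteq> S0" unfolding S_def by auto
  have DLS: "\<And>x. x \<in> S \<Longrightarrow> DL g1 w1 k x \<noteq> 0" unfolding S_def by auto
  have SI: "\<And>x. x \<in> S \<Longrightarrow> fst x \<in> I" unfolding S_def S0_def by auto
  have smH: "smooth_on S (H1 g1 w1)" "smooth_on S (H2 g1 w1)" "smooth_on S (H3 g1 w1)" "smooth_on S (MM k)"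
    using smH0 sm_subset[OF _ SS0] by auto
  have smDL: "smooth_on S (DL g1 w1 k)" using sm_subset[OF smDL0 SS0] .
  define x0 :: "real \<times> real \<times> real" where "x0 = (u0, 0, 0)"
  have x0S: "x0 \<in> S"
  proof -
    have "MM k x0 = 0" unfolding MM_def x0_def using k by simp
    then have "DL g1 w1 k x0 = - w1 u0 / 4" unfolding DL_def H1_def H2_def x0_def
      by (simp add: field_simps)
    then show ?thesis unfolding S_def S0_def x0_def using u0 by simp
  qed
  have dT: "\<And>x. x \<in> S \<Longrightarrow> (Th g1 w1 k has_derivative DD g1 w1 k x) (at x)"
    by (rule Th_deriv[OF I g SI k])
  have inv: "\<And>x w. x \<in> S \<Longrightarrow> DD g1 w1 k x (LL g1 w1 k x w) = w"
    by (rule DD_LL[OF DLS])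
  have linL: "linear (LL g1 w1 k x)" for x
    by (rule linearI) (simp_all add: LL_def algebra_simps diff_divide_distrib add_divide_distrib)
  have sD: "smooth_on S (\<lambda>x. DD g1 w1 k x w)" for w
    unfolding DD_def using smH
    by (auto intro!: sm_pair sm_add sm_mult sm_const sm_divide sm_diff)
  have sL: "smooth_on S (\<lambda>x. LL g1 w1 k x w)" for w
    unfolding LL_def using smH smDL DLS
    by (auto intro!: sm_pair sm_add sm_mult sm_const sm_divide sm_diff)
  have smT: "smooth_on S (Th g1 w1 k)" by (rule smooth_by_deriv[OF dT sD])
  obtain U' V g where U': "open U'" "x0 \<in> U'" "U' \<subseteq> S" "open V" "Th g1 w1 k ` U' = V" "g ` V = U'"
    and gT: "\<And>x. x \<in> U' \<Longrightarrow> g (Th g1 w1 k x) = x" and Tg: "\<And>y. y \<in> V \<Longrightarrow> Th g1 w1 k (g y) = y"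
    and smg: "smooth_on V g"
    using smooth_local_inverse[OF oS x0S dT inv linL sm_cont[OF sD] sL] by metis
  define cu :: "real \<times> real \<Rightarrow> real \<times> real \<times> real" where "cu = cuspidal_edge k"
  have cu: "cu x = (fst x, (snd x)^2, (snd x)^(2*k+1))" for x
    unfolding cu_def cuspidal_edge_def by (simp add: case_prod_beta)
  have ccu: "continuous_on UNIV cu" unfolding cu[abs_def] by (intro continuous_intros)
  define U where "U = cu -` U'"
  have oU: "open U" using continuous_on_open_vimage[OF open_UNIV, of cu] ccu U'(1) unfolding U_def by simp
  define c2 :: "real \<times> real" where "c2 = (- u0, 0)"
  define c3 :: "real \<times> real \<times> real" where "c3 = (- u0, 0, 0)"
  define \<phi> where "\<phi> = (\<lambda>x. x + c2)"
  define \<psi> where "\<psi> = (\<lambda>y. g y + c3)"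
  define f where "f = wsurf g1 w1 (\<lambda>v. v ^ (2 * k - 1)) (\<lambda>v. v)"
  have f: "f x = Th g1 w1 k (cu x)" for x unfolding f_def cu_def by (rule wsurf_Th[OF k])
  have p0: "(u0, 0) \<in> U" unfolding U_def using U'(2) by (simp add: cu x0_def)
  have tr: "open ((\<lambda>x. x + c) ` A)" if "open A" for A and c :: "'z::real_normed_vector"
  proof -
    have "(\<lambda>x. x + c) ` A = (\<lambda>x. c + x) ` A" by (simp add: add.commute)
    then show ?thesis using open_translation[OF that, of c] by simp
  qed
  have d1: "diffeo_between U (\<phi> ` U) \<phi>"
    unfolding diffeo_between_def
  proof (intro conjI)
    show "open U" by (rule oU)
    show "open (\<phi> ` U)" unfolding \<phi>_def by (rule tr[OF oU])
    show "smooth_on U \<phi>" unfolding \<phi>_def by (intro sm_add sm_id sm_const)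
    show "\<phi> ` U = \<phi> ` U" ..
    show "\<exists>\<psi>. smooth_on (\<phi> ` U) \<psi> \<and> \<psi> ` \<phi> ` U = U \<and> (\<forall>x\<in>U. \<psi> (\<phi> x) = x) \<and> (\<forall>y\<in>\<phi> ` U. \<phi> (\<psi> y) = y)"
      by (rule exI[of _ "\<lambda>y. y - c2"]) (auto simp: \<phi>_def image_image intro!: sm_diff sm_id sm_const)
  qed
  have \<psi>V: "\<psi> ` V = (\<lambda>x. x + c3) ` U'" unfolding \<psi>_def using U'(6) by (auto simp: image_image[symmetric])
  have d2: "diffeo_between V (\<psi> ` V) \<psi>"
    unfolding diffeo_between_def
  proof (intro conjI)
    show "open V" by (rule U'(4))
    show "open (\<psi> ` V)" unfolding \<psi>V by (rule tr[OF U'(1)])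
    show "smooth_on V \<psi>" unfolding \<psi>_def by (intro sm_add smg sm_const)
    show "\<psi> ` V = \<psi> ` V" ..
    have sm: "smooth_on (\<psi> ` V) (\<lambda>z. Th g1 w1 k (z - c3))"
      by (rule sm_comp[OF smT sm_diff[OF sm_id sm_const]]) (use U'(3) in \<open>auto simp: \<psi>V\<close>)
    show "\<exists>\<eta>. smooth_on (\<psi> ` V) \<eta> \<and> \<eta> ` \<psi> ` V = V \<and> (\<forall>x\<in>V. \<eta> (\<psi> x) = x) \<and> (\<forall>y\<in>\<psi> ` V. \<psi> (\<eta> y) = y)"
    proof (rule exI[of _ "\<lambda>z. Th g1 w1 k (z - c3)"], intro conjI ballI)
      show "smooth_on (\<psi> ` V) (\<lambda>z. Th g1 w1 k (z - c3))" by (rule sm)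
      show "(\<lambda>z. Th g1 w1 k (z - c3)) ` \<psi> ` V = V"
        unfolding \<psi>_def image_image using Tg by (auto simp: image_iff)
      show "Th g1 w1 k (\<psi> x - c3) = x" if "x \<in> V" for x using Tg that unfolding \<psi>_def by simp
      show "\<psi> (Th g1 w1 k (y - c3)) = y" if "y \<in> \<psi> ` V" for y
        using that Tg unfolding \<psi>_def by auto
    qed
  qed
  have fp: "f (u0, 0) \<in> V" using U'(2,5) f[of "(u0,0)"] by (auto simp: cu x0_def)
  have \<phi>p: "\<phi> (u0, 0) = (0, 0)" unfolding \<phi>_def c2_def by simp
  have \<psi>fp: "\<psi> (f (u0, 0)) = cuspidal_edge k (0, 0)"
    using f[of "(u0,0)"] gT[OF U'(2)] k unfolding \<psi>_def c3_def cuspidal_edge_def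
    by (simp add: cu x0_def)
  have all: "\<forall>x\<in>U. f x \<in> V \<and> \<psi> (f x) = cuspidal_edge k (\<phi> x)"
  proof
    fix x assume x: "x \<in> U"
    then have cx: "cu x \<in> U'" unfolding U_def by simp
    show "f x \<in> V \<and> \<psi> (f x) = cuspidal_edge k (\<phi> x)"
      using cx U'(5) gT[OF cx] unfolding f \<psi>_def \<phi>_def
      by (auto simp: c2_def c3_def cu cuspidal_edge_def case_prod_beta)
  qed
  show ?thesis
    unfolding A_equivalent_def f_def[symmetric]
    using p0 d1 \<phi>p fp d2 \<psi>fp all by blast
qed

theorem proposition4p7:
  fixes k :: nat and g1 w1 :: "real \<Rightarrow> real" and I :: "real set"
  assumes "k \<ge> 1"
    and "open I" and "is_interval I" and "0 \<in> I"
    and "smooth_on I g1" and "smooth_on I w1"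
    and "w1 0 \<noteq> 0"
  shows "(\<forall>u0\<in>I. w1 u0 \<noteq> 0 \<longrightarrow>
            A_equivalent (wsurf g1 w1 (\<lambda>v. v ^ (2 * k - 1)) (\<lambda>v. v)) (u0, 0)
                         (cuspidal_edge k) (0, 0))
       \<and> (\<exists>e>0. \<forall>u0. \<bar>u0\<bar> < e \<longrightarrow> u0 \<in> I \<and>
            A_equivalent (wsurf g1 w1 (\<lambda>v. v ^ (2 * k - 1)) (\<lambda>v. v)) (u0, 0)
                         (cuspidal_edge k) (0, 0))"
proof (intro conjI)
  show P: "\<forall>u0\<in>I. w1 u0 \<noteq> 0 \<longrightarrow>
            A_equivalent (wsurf g1 w1 (\<lambda>v. v ^ (2 * k - 1)) (\<lambda>v. v)) (u0, 0)
                         (cuspidal_edge k) (0, 0)"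
    using main_point[OF assms(1-6)] by blast
  obtain e1 where e1: "e1 > 0" "ball 0 e1 \<subseteq> I" using assms(2,4) open_contains_ball by blast
  have c: "continuous_on I w1" using sm_cont[OF assms(6)] .
  obtain d where d: "d > 0" "\<And>x. x \<in> I \<Longrightarrow> dist x 0 < d \<Longrightarrow> dist (w1 x) (w1 0) < \<bar>w1 0\<bar>"
    using c assms(4,7) unfolding continuous_on_iff by (metis zero_less_abs_iff)
  show "\<exists>e>0. \<forall>u0. \<bar>u0\<bar> < e \<longrightarrow> u0 \<in> I \<and>
            A_equivalent (wsurf g1 w1 (\<lambda>v. v ^ (2 * k - 1)) (\<lambda>v. v)) (u0, 0)
                         (cuspidal_edge k) (0, 0)"
  proof (intro exI[of _ "min e1 d"] conjI allI impI)
    show "min e1 d > 0" using e1 d by simp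
    fix u0 :: real assume u: "\<bar>u0\<bar> < min e1 d"
    show uI: "u0 \<in> I" using u e1 by (auto simp: dist_real_def)
    have "dist (w1 u0) (w1 0) < \<bar>w1 0\<bar>" using d(2)[OF uI] u by (simp add: dist_real_def)
    then have "w1 u0 \<noteq> 0" by (auto simp: dist_real_def)
    then show "A_equivalent (wsurf g1 w1 (\<lambda>v. v ^ (2 * k - 1)) (\<lambda>v. v)) (u0, 0)
                         (cuspidal_edge k) (0, 0)" using P uI by blast
  qed
qed

end
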